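(* Assume the capacities satisfy (C1)–(C3), with limiting sequence $\{g_n\}_{n\ge0}$ from (C2). Then there exists $\alpha>0$ such that $$\sum_{n=0}^\infty n\,\big|g^{(N)}_n-g_n\big|=O(N^{-\alpha}).$$
   Context: Capacities $\lambda_1,\dots,\lambda_N>0$ deterministic; $\mu_N=\frac1N\sum_i\lambda_i$, $\nu_N=\sum_i\lambda_i^2/\sum_i\lambda_i$, $f^{(N)}_n=\frac1N\sum_i e^{-\lambda_i}\frac{\lambda_i^n}{n!}$, $g^{(N)}_n=\frac{1}{N\mu_N}\sum_i e^{-\lambda_i}\frac{\lambda_i^{n+1}}{n!}$ ($n\ge0$); $d_{TV}(p,q)=\frac12\sum_j|p_j-q_j|$. (C1): there are $\mu\in(0,\infty)$, $\nu\in(1,\infty)$, $\alpha_1>0$ with $|\mu_N-\mu|,|\nu_N-\nu|=O(N^{-\alpha_1})$. (C2): there are sequences $\{f_n\}$, $\{g_n\}$ independent of $N$ and $\alpha_2>0$ with $d_{TV}(f^{(N)},f)=O(N^{-\alpha_2})$, $d_{TV}(g^{(N)},g)=O(N^{-\alpha_2})$. (C3): there is $\tau>3$ such that for every $\varepsilon>0$ (with $\gamma:=\frac1{\tau-1}+\varepsilon<\frac12$), $\limsup_N\frac1N\sum_i\lambda_i^{\tau-1-\varepsilon}<\infty$ and $\max_i\lambda_i\le N^\gamma$. *)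

theory Defs
  imports "HOL-Analysis.Analysis" "HOL-Library.Landau_Symbols"
begin

text \<open>Capacities form a triangular array: for system size N the capacities are
  lam N i for i < N.\<close>

definition muN :: "(nat \<Rightarrow> nat \<Rightarrow> real) \<Rightarrow> nat \<Rightarrow> real" where
  "muN lam N = (\<Sum>i<N. lam N i) / real N"

definition nuN :: "(nat \<Rightarrow> nat \<Rightarrow> real) \<Rightarrow> nat \<Rightarrow> real" where
  "nuN lam N = (\<Sum>i<N. (lam N i)^2) / (\<Sum>i<N. lam N i)"

definition fN :: "(nat \<Rightarrow> nat \<Rightarrow> real) \<Rightarrow> nat \<Rightarrow> nat \<Rightarrow> real" where
  "fN lam N n = (\<Sum>i<N. exp (- lam N i) * (lam N i)^n / fact n) / real N"

definition gN :: "(nat \<Rightarrow> nat \<Rightarrow> real) \<Rightarrow> nat \<Rightarrow> nat \<Rightarrow> real" where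
  "gN lam N n = (\<Sum>i<N. exp (- lam N i) * (lam N i)^(n+1) / fact n) / (real N * muN lam N)"

text \<open>Total variation distance of two sequences indexed by nat (meaningful when
  the difference is absolutely summable).\<close>
definition d_TV :: "(nat \<Rightarrow> real) \<Rightarrow> (nat \<Rightarrow> real) \<Rightarrow> real" where
  "d_TV p q = (\<Sum>j. \<bar>p j - q j\<bar>) / 2"

definition C1 :: "(nat \<Rightarrow> nat \<Rightarrow> real) \<Rightarrow> bool" where
  "C1 lam \<longleftrightarrow> (\<exists>\<mu> \<nu> \<alpha>1. \<mu> > 0 \<and> \<nu> > 1 \<and> \<alpha>1 > 0 \<and>
     (\<lambda>N. \<bar>muN lam N - \<mu>\<bar>) \<in> O(\<lambda>N. real N powr (- \<alpha>1)) \<and>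
     (\<lambda>N. \<bar>nuN lam N - \<nu>\<bar>) \<in> O(\<lambda>N. real N powr (- \<alpha>1)))"

text \<open>(C2) for given limit sequences f and g; d_TV being O(...) includes
  that it is finite, i.e. the differences are (eventually) absolutely summable.\<close>
definition C2 :: "(nat \<Rightarrow> nat \<Rightarrow> real) \<Rightarrow> (nat \<Rightarrow> real) \<Rightarrow> (nat \<Rightarrow> real) \<Rightarrow> bool" where
  "C2 lam f g \<longleftrightarrow> (\<exists>\<alpha>2 > 0.
     (\<forall>\<^sub>F N in sequentially. summable (\<lambda>n. \<bar>fN lam N n - f n\<bar>)
                               \<and> summable (\<lambda>n. \<bar>gN lam N n - g n\<bar>)) \<and>
     (\<lambda>N. d_TV (fN lam N) f) \<in> O(\<lambda>N. real N powr (- \<alpha>2)) \<and>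
     (\<lambda>N. d_TV (gN lam N) g) \<in> O(\<lambda>N. real N powr (- \<alpha>2)))"

definition C3 :: "(nat \<Rightarrow> nat \<Rightarrow> real) \<Rightarrow> bool" where
  "C3 lam \<longleftrightarrow> (\<exists>\<tau> > 3. \<forall>\<epsilon> > 0. 1 / (\<tau> - 1) + \<epsilon> < 1 / 2 \<longrightarrow>
     (\<exists>B. \<forall>\<^sub>F N in sequentially. (\<Sum>i<N. lam N i powr (\<tau> - 1 - \<epsilon>)) / real N \<le> B) \<and>
     (\<forall>N \<ge> 1. \<forall>i < N. lam N i \<le> real N powr (1 / (\<tau> - 1) + \<epsilon>)))"

end

theory Submission
  imports Defs
begin

lemma pois_sums:
  fixes l :: real
  shows "(\<lambda>m. exp(-l) * l^m / fact m) sums 1"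
    and "(\<lambda>m. real m * (exp(-l) * l^m / fact m)) sums l"
proof -
  have e: "(\<lambda>m. l^m / fact m) sums exp l" using exp_converges[of l] by (simp add: divide_inverse mult.commute)
  have "(\<lambda>m. exp(-l) * (l^m / fact m)) sums (exp(-l) * exp l)" by (rule sums_mult[OF e])
  then show "(\<lambda>m. exp(-l) * l^m / fact m) sums 1" by (simp add: exp_minus field_simps)
  have "(\<lambda>m. l * (exp(-l) * (l^m / fact m))) sums (l * (exp(-l) * exp l))"
    by (rule sums_mult[OF sums_mult[OF e]])
  moreover have "l * (exp(-l) * (l^m / fact m)) = real (Suc m) * (exp(-l) * l^(Suc m) / fact (Suc m))" for m
  proof -
    have "fact (Suc m) = real (Suc m) * (fact m :: real)" by simp
    then show ?thesis by (simp del: of_nat_Suc fact_Suc)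
  qed
  ultimately have "(\<lambda>m. real (Suc m) * (exp(-l) * l^(Suc m) / fact (Suc m))) sums (l * (exp(-l) * exp l))"
    by (metis (no_types, lifting) sums_cong)
  then have "(\<lambda>m. real (Suc m) * (exp(-l) * l^(Suc m) / fact (Suc m))) sums l"
    by (simp add: exp_minus)
  then show "(\<lambda>m. real m * (exp(-l) * l^m / fact m)) sums l"
    by (subst (asm) sums_Suc_iff) simp
qed

lemma young_pt:
  fixes t s q :: real
  assumes "t > 0" "s > 0" "0 < q" "q < 1"
  shows "t powr q \<le> q * s powr (q-1) * t + (1-q) * s powr q"
proof -
  have "t powr q * s powr (1 - q) \<le> q * t + (1 - q) * s"
    using Youngs_inequality_0[of q "1-q" t s] assms by simp
  then have "t powr q * s powr (1 - q) * s powr (q - 1) \<le> (q * t + (1 - q) * s) * s powr (q - 1)"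
    using assms by (intro mult_right_mono) auto
  moreover have "s powr (1-q) * s powr (q-1) = 1" using assms by (simp add: powr_add[symmetric])
  moreover have "s * s powr (q-1) = s powr q"
  proof -
    have "s powr q = s powr (1 + (q - 1))" by simp
    also have "\<dots> = s powr 1 * s powr (q - 1)" by (rule powr_add)
    also have "\<dots> = s * s powr (q - 1)" using assms by simp
    finally show ?thesis by simp
  qed
  ultimately show ?thesis by (simp add: algebra_simps)
qed

lemma pois_qmom:
  fixes l q :: real
  assumes l: "l > 0" and q: "0 < q" "q < 1"
  shows "summable (\<lambda>m. (real m + 1) powr q * (exp(-l) * l^m / fact m))"
    and "(\<Sum>m. (real m + 1) powr q * (exp(-l) * l^m / fact m)) \<le> (l + 1) powr q"
proof -
  define P where "P = (\<lambda>m. exp(-l) * l^m / fact m)"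
  define s where "s = l + 1"
  have s: "s > 0" using l by (simp add: s_def)
  have P0: "P m \<ge> 0" for m using l by (simp add: P_def)
  have S1: "P sums 1" using pois_sums(1)[of l] by (simp add: P_def)
  have S2: "(\<lambda>m. real m * P m) sums l" using pois_sums(2)[of l] by (simp add: P_def)
  have S3: "(\<lambda>m. (real m + 1) * P m) sums (l + 1)"
    using sums_add[OF S2 S1] by (simp add: algebra_simps)
  define R where "R m = q * s powr (q - 1) * ((real m + 1) * P m) + (1 - q) * s powr q * P m" for m
  have SR: "R sums (q * s powr (q - 1) * (l + 1) + (1 - q) * s powr q * 1)"
    unfolding R_def by (intro sums_add sums_mult S1 S3)
  have "s * s powr (q - 1) = s powr q"
  proof -
    have "s powr q = s powr (1 + (q - 1))" by simp
    also have "\<dots> = s powr 1 * s powr (q - 1)" by (rule powr_add)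
    also have "\<dots> = s * s powr (q - 1)" using s by simp
    finally show ?thesis by simp
  qed
  then have "q * s powr (q - 1) * s + (1 - q) * s powr q * 1 = s powr q"
    by (metis (no_types, lifting) mult.commute mult.left_commute mult_1_right add_diff_cancel_left' diff_add_cancel left_diff_distrib' mult_1)
  then have "q * s powr (q - 1) * (l + 1) + (1 - q) * s powr q * 1 = s powr q"
    by (simp add: s_def)
  with SR have SR': "R sums (s powr q)" by simp
  have LR: "(real m + 1) powr q * P m \<le> R m" for m
  proof -
    have "(real m + 1) powr q \<le> q * s powr (q - 1) * (real m + 1) + (1 - q) * s powr q"
      using young_pt[of "real m + 1" s q] s q by simp
    then have "(real m + 1) powr q * P m \<le> (q * s powr (q - 1) * (real m + 1) + (1 - q) * s powr q) * P m"
      using P0 by (intro mult_right_mono) auto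
    then show ?thesis by (simp add: R_def algebra_simps)
  qed
  have sumL: "summable (\<lambda>m. (real m + 1) powr q * P m)"
    by (rule summable_comparison_test'[OF sums_summable[OF SR'], of 0]) (use LR P0 in auto)
  then show "summable (\<lambda>m. (real m + 1) powr q * (exp(-l) * l^m / fact m))" by (simp add: P_def)
  have "(\<Sum>m. (real m + 1) powr q * P m) \<le> (\<Sum>m. R m)"
    by (rule suminf_le[OF LR sumL sums_summable[OF SR']])
  also have "\<dots> = (l + 1) powr q" using SR' s_def sums_unique by metis
  finally show "(\<Sum>m. (real m + 1) powr q * (exp(-l) * l^m / fact m)) \<le> (l + 1) powr q"
    by (simp add: P_def)
qed

lemma aux_cancel:
  fixes x :: real
  assumes "x \<noteq> 0"
  shows "x * A * (E * (L2 * M) / (x * C)) = L2 * (A * (E * M / C))"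
  using assms by (simp add: field_simps)

lemma phi_bound:
  fixes l q :: real
  assumes l: "l > 0" and q: "0 < q" "q < 1"
  shows "summable (\<lambda>n. real n powr (1 + q) * (exp(-l) * l^(n+1) / fact n))"
    and "(\<Sum>n. real n powr (1 + q) * (exp(-l) * l^(n+1) / fact n)) \<le> l^2 * (l + 1) powr q"
proof -
  define h where "h = (\<lambda>n. real n powr (1 + q) * (exp(-l) * l^(n+1) / fact n))"
  define H where "H = (\<lambda>m. (real m + 1) powr q * (exp(-l) * l^m / fact m))"
  have hs: "h (Suc m) = l^2 * H m" for m
  proof -
    have a: "real (Suc m) powr (1 + q) = (real m + 1) * (real m + 1) powr q"
      by (simp add: powr_add add.commute)
    have b: "fact (Suc m) = (real m + 1) * (fact m :: real)" by simp
    have c: "l ^ (Suc m + 1) = l^2 * l^m" by (simp add: power_add power2_eq_square)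
    have "h (Suc m) = (real m + 1) * (real m + 1) powr q * (exp(-l) * (l^2 * l^m) / ((real m + 1) * fact m))"
      unfolding h_def by (simp only: a b c)
    also have "\<dots> = l^2 * H m" unfolding H_def using aux_cancel[of "real m + 1"] by simp
    finally show ?thesis .
  qed
  have h0: "h 0 = 0" using q by (simp add: h_def)
  have HS: "summable H" using pois_qmom(1)[OF l q] by (simp add: H_def)
  have "(\<lambda>m. h (Suc m)) sums (l^2 * suminf H)"
    unfolding hs by (intro sums_mult summable_sums HS)
  then have hsum: "h sums (l^2 * suminf H)" using h0 by (simp add: sums_Suc_iff)
  then show "summable (\<lambda>n. real n powr (1 + q) * (exp(-l) * l^(n+1) / fact n))"
    by (simp add: h_def sums_summable)
  have "suminf h = l^2 * suminf H" using hsum sums_unique by metis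
  also have "\<dots> \<le> l^2 * (l + 1) powr q"
    using pois_qmom(2)[OF l q] by (intro mult_left_mono) (auto simp: H_def)
  finally show "(\<Sum>n. real n powr (1 + q) * (exp(-l) * l^(n+1) / fact n)) \<le> l^2 * (l + 1) powr q"
    by (simp add: h_def)
qed

lemma pt_bound:
  fixes l q p :: real
  assumes l: "l > 0" and q: "0 < q" "q < 1" and p: "2 + q \<le> p"
  shows "l^2 * (l + 1) powr q \<le> 2 * l + 2 * l powr p"
proof (cases "l \<le> 1")
  case True
  have "(l + 1) powr q \<le> 2 powr q" using l True q by (intro powr_mono2) auto
  also have "\<dots> \<le> 2 powr 1" using q by (intro powr_mono) auto
  finally have a: "(l + 1) powr q \<le> 2" by simp
  have b: "l^2 \<le> l" using l True by (simp add: power2_eq_square mult_le_cancel_right1)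
  have "l^2 * (l + 1) powr q \<le> l * 2" using a b l
    by (meson mult_mono order_trans zero_le_power2 less_imp_le powr_ge_zero)
  moreover have "l powr p \<ge> 0" by simp
  ultimately show ?thesis by linarith
next
  case False
  have "(l + 1) powr q \<le> (2 * l) powr q" using l False q by (intro powr_mono2) auto
  also have "\<dots> = 2 powr q * l powr q" using l by (simp add: powr_mult)
  also have "\<dots> \<le> 2 * l powr q"
  proof -
    have "2 powr q \<le> 2 powr 1" using q by (intro powr_mono) auto
    then show ?thesis by (intro mult_right_mono) auto
  qed
  finally have a: "(l + 1) powr q \<le> 2 * l powr q" .
  have "l^2 * (l + 1) powr q \<le> l^2 * (2 * l powr q)" using a by (intro mult_left_mono) auto
  also have "\<dots> = 2 * l powr (2 + q)" using l by (simp add: powr_add powr_realpow)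
  also have "\<dots> \<le> 2 * l powr p" using False p by (intro mult_left_mono powr_mono) auto
  finally show ?thesis using l by simp
qed

lemma gN_nonneg:
  assumes pos: "\<And>i. i < N \<Longrightarrow> lam N i > 0"
  shows "gN lam N n \<ge> 0"
proof -
  have "(\<Sum>i<N. exp (- lam N i) * (lam N i)^(n+1) / fact n) \<ge> 0"
    using pos by (intro sum_nonneg) (auto intro!: divide_nonneg_pos mult_nonneg_nonneg less_imp_le)
  moreover have "muN lam N \<ge> 0" unfolding muN_def
    using pos by (intro divide_nonneg_nonneg sum_nonneg) (auto intro: less_imp_le)
  ultimately show ?thesis unfolding gN_def by (intro divide_nonneg_nonneg) auto
qed

lemma mom_gN:
  fixes lam :: "nat \<Rightarrow> nat \<Rightarrow> real"
  assumes N: "N > 0" and pos: "\<And>i. i < N \<Longrightarrow> lam N i > 0"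
    and q: "0 < q" "q < 1" and p: "2 + q \<le> p"
    and mu: "muN lam N \<ge> m0" "m0 > 0"
    and B: "(\<Sum>i<N. lam N i powr p) / real N \<le> B"
  shows "summable (\<lambda>n. real n powr (1 + q) * gN lam N n)"
    and "(\<Sum>n. real n powr (1 + q) * gN lam N n) \<le> 2 + 2 * B / m0"
proof -
  define D where "D = (\<Sum>i<N. lam N i)"
  have D: "D > 0" unfolding D_def using N pos by (intro sum_pos) auto
  have ND: "real N * muN lam N = D" using N by (simp add: muN_def D_def)
  define h where "h = (\<lambda>i n. real n powr (1 + q) * (exp(- lam N i) * (lam N i)^(n+1) / fact n))"
  have eq: "(\<lambda>n. real n powr (1 + q) * gN lam N n) = (\<lambda>n. (\<Sum>i<N. h i n) / D)"
    by (rule ext) (simp add: gN_def ND h_def sum_distrib_left)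
  have hs: "summable (h i)" if "i < N" for i
    unfolding h_def using phi_bound(1)[OF pos[OF that] q] .
  show "summable (\<lambda>n. real n powr (1 + q) * gN lam N n)"
    unfolding eq by (intro summable_divide summable_sum hs) auto
  have "(\<Sum>n. real n powr (1 + q) * gN lam N n) = (\<Sum>i<N. suminf (h i)) / D"
  proof -
    have "(\<Sum>n. (\<Sum>i<N. h i n) / D) = (\<Sum>n. \<Sum>i<N. h i n) / D"
      by (rule suminf_divide) (auto intro!: summable_sum hs)
    also have "(\<Sum>n. \<Sum>i<N. h i n) = (\<Sum>i<N. suminf (h i))"
      by (rule suminf_sum) (auto intro: hs)
    finally show ?thesis unfolding eq .
  qed
  also have "\<dots> \<le> (\<Sum>i<N. 2 * lam N i + 2 * lam N i powr p) / D"
  proof (intro divide_right_mono sum_mono)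
    fix i assume "i \<in> {..<N}"
    then have i: "lam N i > 0" using pos by auto
    show "suminf (h i) \<le> 2 * lam N i + 2 * lam N i powr p"
      using phi_bound(2)[OF i q] pt_bound[OF i q p] unfolding h_def by linarith
  qed (use D in auto)
  also have "\<dots> = 2 + 2 * ((\<Sum>i<N. lam N i powr p) / D)"
    using D by (simp add: sum.distrib sum_distrib_left[symmetric] D_def[symmetric] field_simps)
  also have "(\<Sum>i<N. lam N i powr p) / D = ((\<Sum>i<N. lam N i powr p) / real N) / muN lam N"
    using N by (simp add: ND[symmetric])
  also have "\<dots> \<le> B / m0"
  proof (rule frac_le)
    show "0 \<le> B" using B by (smt (verit) divide_nonneg_nonneg of_nat_0_le_iff powr_ge_zero sum_nonneg)
  qed (use B mu in auto)
  finally show "(\<Sum>n. real n powr (1 + q) * gN lam N n) \<le> 2 + 2 * B / m0" by simp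
qed

lemma pt_main:
  fixes X q d G h :: real and n :: nat
  assumes X: "X > 0" and q: "q > 0" and dG: "\<bar>d\<bar> \<le> G + \<bar>h\<bar>" and G: "G \<ge> 0"
  shows "real n * \<bar>d\<bar> \<le> X * \<bar>d\<bar> + X powr (- q) * (real n powr (1 + q) * G + real n powr (1 + q) * \<bar>h\<bar>)"
proof (cases "real n \<le> X")
  case True
  then have "real n * \<bar>d\<bar> \<le> X * \<bar>d\<bar>" by (intro mult_right_mono) auto
  moreover have "X powr (- q) * (real n powr (1 + q) * G + real n powr (1 + q) * \<bar>h\<bar>) \<ge> 0"
    using G by (intro mult_nonneg_nonneg add_nonneg_nonneg) auto
  ultimately show ?thesis by linarith
next
  case False
  then have n: "real n > 0" "real n \<ge> X" using X by auto
  have "real n = real n powr (1 + q + (- q))" using n by simp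
  also have "\<dots> = real n powr (1 + q) * real n powr (- q)" by (rule powr_add)
  also have "\<dots> \<le> real n powr (1 + q) * X powr (- q)"
    using n X q by (intro mult_left_mono powr_mono2') auto
  finally have a: "real n \<le> real n powr (1 + q) * X powr (- q)" .
  have "real n * \<bar>d\<bar> \<le> (real n powr (1 + q) * X powr (- q)) * (G + \<bar>h\<bar>)"
    using a dG n by (intro mult_mono) auto
  also have "\<dots> = X powr (- q) * (real n powr (1 + q) * G + real n powr (1 + q) * \<bar>h\<bar>)"
    by (simp add: algebra_simps)
  finally show ?thesis by (smt (verit) abs_ge_zero mult_nonneg_nonneg X)
qed

lemma final_bound:
  fixes d G h :: "nat \<Rightarrow> real" and X q :: real
  assumes X: "X > 0" and q: "q > 0" and sd: "summable (\<lambda>n. \<bar>d n\<bar>)"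
    and sG: "summable (\<lambda>n. real n powr (1 + q) * G n)"
    and sh: "summable (\<lambda>n. real n powr (1 + q) * \<bar>h n\<bar>)"
    and dG: "\<And>n. \<bar>d n\<bar> \<le> G n + \<bar>h n\<bar>" and G: "\<And>n. G n \<ge> 0"
  shows "summable (\<lambda>n. real n * \<bar>d n\<bar>)"
    and "(\<Sum>n. real n * \<bar>d n\<bar>) \<le> X * (\<Sum>n. \<bar>d n\<bar>) + X powr (- q) *
            ((\<Sum>n. real n powr (1 + q) * G n) + (\<Sum>n. real n powr (1 + q) * \<bar>h n\<bar>))"
proof -
  define R where "R = (\<lambda>n. X * \<bar>d n\<bar> + X powr (- q) * (real n powr (1 + q) * G n + real n powr (1 + q) * \<bar>h n\<bar>))"
  have RS: "R sums (X * (\<Sum>n. \<bar>d n\<bar>) + X powr (- q) *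
            ((\<Sum>n. real n powr (1 + q) * G n) + (\<Sum>n. real n powr (1 + q) * \<bar>h n\<bar>)))"
  proof -
    have a: "(\<lambda>n. X * \<bar>d n\<bar>) sums (X * (\<Sum>n. \<bar>d n\<bar>))"
      by (rule sums_mult[OF summable_sums[OF sd]])
    have b: "(\<lambda>n. real n powr (1 + q) * G n + real n powr (1 + q) * \<bar>h n\<bar>) sums
        ((\<Sum>n. real n powr (1 + q) * G n) + (\<Sum>n. real n powr (1 + q) * \<bar>h n\<bar>))"
      by (rule sums_add[OF summable_sums[OF sG] summable_sums[OF sh]])
    show ?thesis unfolding R_def by (rule sums_add[OF a sums_mult[OF b]])
  qed
  have LR: "real n * \<bar>d n\<bar> \<le> R n" for n
    unfolding R_def by (rule pt_main[OF X q dG G])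
  have sL: "summable (\<lambda>n. real n * \<bar>d n\<bar>)"
  proof (rule summable_comparison_test'[OF sums_summable[OF RS], of 0])
    fix n :: nat
    show "norm (real n * \<bar>d n\<bar>) \<le> R n" using LR[of n] by (simp add: abs_mult)
  qed
  then show "summable (\<lambda>n. real n * \<bar>d n\<bar>)" .
  have "(\<Sum>n. real n * \<bar>d n\<bar>) \<le> suminf R"
    by (rule suminf_le[OF LR sL sums_summable[OF RS]])
  also have "\<dots> = X * (\<Sum>n. \<bar>d n\<bar>) + X powr (- q) *
            ((\<Sum>n. real n powr (1 + q) * G n) + (\<Sum>n. real n powr (1 + q) * \<bar>h n\<bar>))"
    by (rule sums_unique[OF RS, symmetric])
  finally show "(\<Sum>n. real n * \<bar>d n\<bar>) \<le> X * (\<Sum>n. \<bar>d n\<bar>) + X powr (- q) *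
            ((\<Sum>n. real n powr (1 + q) * G n) + (\<Sum>n. real n powr (1 + q) * \<bar>h n\<bar>))" .
qed

lemma powr_tendsto0:
  fixes c a :: real
  assumes "a > 0"
  shows "(\<lambda>N::nat. c * real N powr (- a)) \<longlonglongrightarrow> 0"
proof -
  have "(\<lambda>N::nat. real N powr (- a)) \<longlonglongrightarrow> 0"
    using assms by (intro tendsto_neg_powr filterlim_real_sequentially) auto
  from tendsto_mult[OF tendsto_const[of c] this] show ?thesis by simp
qed

lemma bigo_ev:
  fixes F :: "nat \<Rightarrow> real"
  assumes "F \<in> O(\<lambda>N. real N powr (- a))"
  obtains c where "c > 0" "eventually (\<lambda>N. \<bar>F N\<bar> \<le> c * real N powr (- a)) sequentially"
proof -
  from assms obtain c where c: "c > 0" "eventually (\<lambda>N. norm (F N) \<le> c * norm (real N powr (- a))) sequentially"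
    by (elim landau_o.bigE)
  from c(2) have "eventually (\<lambda>N. \<bar>F N\<bar> \<le> c * real N powr (- a)) sequentially"
    by (rule eventually_mono) simp
  with c(1) show ?thesis using that by blast
qed

theorem lemmaD6:
  fixes lam :: "nat \<Rightarrow> nat \<Rightarrow> real" and f g :: "nat \<Rightarrow> real"
  assumes pos: "\<And>N i. i < N \<Longrightarrow> lam N i > 0"
    and "C1 lam" and "C2 lam f g" and "C3 lam"
  shows "\<exists>\<alpha> > 0. (\<forall>\<^sub>F N in sequentially. summable (\<lambda>n. real n * \<bar>gN lam N n - g n\<bar>)) \<and>
           (\<lambda>N. \<Sum>n. real n * \<bar>gN lam N n - g n\<bar>) \<in> O(\<lambda>N. real N powr (- \<alpha>))"
proof -
  from \<open>C1 lam\<close> obtain \<mu> \<nu> \<alpha>1 where mu: "\<mu> > 0" "\<alpha>1 > 0"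
    and muO: "(\<lambda>N. \<bar>muN lam N - \<mu>\<bar>) \<in> O(\<lambda>N. real N powr (- \<alpha>1))"
    unfolding C1_def by blast
  obtain c1 where c1: "c1 > 0" "eventually (\<lambda>N. \<bar>\<bar>muN lam N - \<mu>\<bar>\<bar> \<le> c1 * real N powr (- \<alpha>1)) sequentially"
    using bigo_ev[OF muO] by blast
  have "eventually (\<lambda>N. c1 * real N powr (- \<alpha>1) < \<mu> / 2) sequentially"
    using order_tendstoD(2)[OF powr_tendsto0[OF mu(2), of c1], of "\<mu> / 2"] mu by simp
  with c1(2) have ev_mu: "eventually (\<lambda>N. muN lam N \<ge> \<mu> / 2) sequentially"
    by eventually_elim linarith
  from \<open>C2 lam f g\<close> obtain \<alpha>2 where a2: "\<alpha>2 > 0"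
    and evs: "\<forall>\<^sub>F N in sequentially. summable (\<lambda>n. \<bar>fN lam N n - f n\<bar>) \<and> summable (\<lambda>n. \<bar>gN lam N n - g n\<bar>)"
    and gO: "(\<lambda>N. d_TV (gN lam N) g) \<in> O(\<lambda>N. real N powr (- \<alpha>2))"
    unfolding C2_def by blast
  obtain c2 where c2: "c2 > 0" "eventually (\<lambda>N. \<bar>d_TV (gN lam N) g\<bar> \<le> c2 * real N powr (- \<alpha>2)) sequentially"
    using bigo_ev[OF gO] by blast
  from \<open>C3 lam\<close> obtain \<tau> where tau: "\<tau> > 3" and H: "\<And>\<epsilon>. \<epsilon> > 0 \<Longrightarrow> 1 / (\<tau> - 1) + \<epsilon> < 1 / 2 \<Longrightarrow>
     (\<exists>B. \<forall>\<^sub>F N in sequentially. (\<Sum>i<N. lam N i powr (\<tau> - 1 - \<epsilon>)) / real N \<le> B)"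
    unfolding C3_def by blast
  define t where "t = \<tau> - 1"
  have t: "t > 2" using tau by (simp add: t_def)
  have t1: "1 / t < 1 / 2" using t by (simp add: divide_strict_left_mono)
  define \<epsilon> where "\<epsilon> = min ((1 / 2 - 1 / t) / 2) ((t - 2) / 2)"
  have e1: "\<epsilon> \<le> (1 / 2 - 1 / t) / 2" unfolding \<epsilon>_def by (rule min.cobounded1)
  have eps1: "\<epsilon> > 0" using t t1 by (simp add: \<epsilon>_def)
  have eps2: "1 / (\<tau> - 1) + \<epsilon> < 1 / 2" unfolding t_def[symmetric]
  proof -
    define u where "u = 1 / t"
    have "\<epsilon> \<le> (1 / 2 - u) / 2" "u < 1 / 2" using e1 t1 by (simp_all add: u_def)
    then have "u + \<epsilon> < 1 / 2" by argo
    then show "1 / t + \<epsilon> < 1 / 2" by (simp add: u_def)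
  qed
  note eps = eps1 eps2
  define q where "q = min ((t - 2) / 2) (1 / 2)"
  define p where "p = \<tau> - 1 - \<epsilon>"
  have q: "0 < q" "q < 1" using t by (auto simp: q_def)
  have p: "2 + q \<le> p"
  proof -
    have a: "q \<le> (t - 2) / 2" unfolding q_def by (rule min.cobounded1)
    have b: "\<epsilon> \<le> (t - 2) / 2" unfolding \<epsilon>_def by (rule min.cobounded2)
    have c: "p = t - \<epsilon>" by (simp add: p_def t_def)
    show ?thesis using a b c by argo
  qed
  obtain B where B: "\<forall>\<^sub>F N in sequentially. (\<Sum>i<N. lam N i powr p) / real N \<le> B"
    using H[OF eps] unfolding p_def by blast
  define A where "A = 2 + 2 * B / (\<mu> / 2)"
  have gnn: "\<And>N n. gN lam N n \<ge> 0"
  proof -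
    fix N n
    show "gN lam N n \<ge> 0" by (rule gN_nonneg) (rule pos)
  qed
  have ev: "\<forall>\<^sub>F N in sequentially. N \<ge> 1 \<and> muN lam N \<ge> \<mu> / 2 \<and> summable (\<lambda>n. \<bar>gN lam N n - g n\<bar>)
      \<and> \<bar>d_TV (gN lam N) g\<bar> \<le> c2 * real N powr (- \<alpha>2) \<and> (\<Sum>i<N. lam N i powr p) / real N \<le> B"
    using ev_mu evs c2(2) B eventually_ge_at_top[of 1] by eventually_elim auto
  have momN: "\<forall>\<^sub>F N in sequentially. summable (\<lambda>n. real n powr (1 + q) * gN lam N n)
       \<and> (\<Sum>n. real n powr (1 + q) * gN lam N n) \<le> A"
    using ev
  proof eventually_elim
    case (elim N)
    then have N: "N > 0" by auto
    have m1: "muN lam N \<ge> \<mu> / 2" using elim by auto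
    have m2: "\<mu> / 2 > 0" using mu by auto
    have Bf: "(\<Sum>i<N. lam N i powr p) / real N \<le> B" using elim by auto
    show ?case using mom_gN[OF N pos q p m1 m2 Bf] unfolding A_def by auto
  qed
  have sumd: "\<bar>gN lam N n - g n\<bar> \<le> 2 * c2 * real N powr (- \<alpha>2)"
    if "summable (\<lambda>n. \<bar>gN lam N n - g n\<bar>)" "\<bar>d_TV (gN lam N) g\<bar> \<le> c2 * real N powr (- \<alpha>2)" for N n
  proof -
    have "\<bar>gN lam N n - g n\<bar> = (\<Sum>j\<in>{n}. \<bar>gN lam N j - g j\<bar>)" by simp
    also have "\<dots> \<le> (\<Sum>j. \<bar>gN lam N j - g j\<bar>)" by (rule sum_le_suminf[OF that(1)]) auto
    also have "\<dots> = 2 * d_TV (gN lam N) g" by (simp add: d_TV_def)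
    finally show ?thesis using that(2) by linarith
  qed
  have conv: "(\<lambda>N. gN lam N n) \<longlonglongrightarrow> g n" for n
  proof -
    have "(\<lambda>N. gN lam N n - g n) \<longlonglongrightarrow> 0"
    proof (rule Lim_null_comparison)
      show "\<forall>\<^sub>F N in sequentially. norm (gN lam N n - g n) \<le> 2 * c2 * real N powr (- \<alpha>2)"
        using ev by eventually_elim (use sumd in auto)
      show "(\<lambda>N. 2 * c2 * real N powr (- \<alpha>2)) \<longlonglongrightarrow> 0" by (rule powr_tendsto0[OF a2])
    qed
    then show ?thesis by (simp add: LIM_zero_iff)
  qed
  have gpart: "(\<Sum>n<K. real n powr (1 + q) * \<bar>g n\<bar>) \<le> A" for K
  proof (rule tendsto_upperbound)
    show "(\<lambda>N. \<Sum>n<K. real n powr (1 + q) * \<bar>gN lam N n\<bar>) \<longlonglongrightarrow> (\<Sum>n<K. real n powr (1 + q) * \<bar>g n\<bar>)"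
      by (intro tendsto_sum tendsto_mult tendsto_const tendsto_rabs conv)
    show "\<forall>\<^sub>F N in sequentially. A \<ge> (\<Sum>n<K. real n powr (1 + q) * \<bar>gN lam N n\<bar>)"
      using momN
    proof eventually_elim
      case (elim N)
      have "(\<Sum>n<K. real n powr (1 + q) * \<bar>gN lam N n\<bar>) = (\<Sum>n<K. real n powr (1 + q) * gN lam N n)"
        using gnn by simp
      also have "\<dots> \<le> (\<Sum>n. real n powr (1 + q) * gN lam N n)"
        using elim gnn by (intro sum_le_suminf) auto
      finally show ?case using elim by linarith
    qed
  qed simp
  have gsum: "summable (\<lambda>n. real n powr (1 + q) * \<bar>g n\<bar>)"
  proof (rule bounded_imp_summable[of _ A])
    fix n :: nat
    show "0 \<le> real n powr (1 + q) * \<bar>g n\<bar>" by simp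
    show "(\<Sum>k\<le>n. real k powr (1 + q) * \<bar>g k\<bar>) \<le> A"
      using gpart[of "Suc n"] by (simp only: lessThan_Suc_atMost)
  qed
  have gbd: "(\<Sum>n. real n powr (1 + q) * \<bar>g n\<bar>) \<le> A"
    by (rule suminf_le_const[OF gsum gpart])
  define \<beta> where "\<beta> = \<alpha>2 / 2"
  have beta: "\<beta> > 0" using a2 by (simp add: \<beta>_def)
  define C where "C = 2 * c2 + 2 * A"
  have main: "\<forall>\<^sub>F N in sequentially. summable (\<lambda>n. real n * \<bar>gN lam N n - g n\<bar>) \<and>
      (\<Sum>n. real n * \<bar>gN lam N n - g n\<bar>) \<le> C * real N powr (- (\<beta> * q))"
    using ev momN
  proof eventually_elim
    case (elim N)
    define X where "X = real N powr \<beta>"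
    have N1: "real N \<ge> 1" using elim by auto
    have X: "X > 0" using N1 by (simp add: X_def)
    have dG: "\<bar>gN lam N n - g n\<bar> \<le> gN lam N n + \<bar>g n\<bar>" for n
      using gnn[of N n] by linarith
    note fb = final_bound[OF X q(1) _ _ gsum dG gnn]
    have sd: "summable (\<lambda>n. \<bar>gN lam N n - g n\<bar>)" using elim by auto
    have sG: "summable (\<lambda>n. real n powr (1 + q) * gN lam N n)" using elim by auto
    show ?case
    proof
      show "summable (\<lambda>n. real n * \<bar>gN lam N n - g n\<bar>)" by (rule fb(1)[OF sd sG])
      have "(\<Sum>n. real n * \<bar>gN lam N n - g n\<bar>) \<le> X * (\<Sum>n. \<bar>gN lam N n - g n\<bar>) + X powr (- q) *
            ((\<Sum>n. real n powr (1 + q) * gN lam N n) + (\<Sum>n. real n powr (1 + q) * \<bar>g n\<bar>))"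
        by (rule fb(2)[OF sd sG])
      also have "\<dots> \<le> X * (2 * c2 * real N powr (- \<alpha>2)) + X powr (- q) * (A + A)"
      proof (intro add_mono mult_left_mono)
        have "(\<Sum>n. \<bar>gN lam N n - g n\<bar>) = 2 * d_TV (gN lam N) g" by (simp add: d_TV_def)
        then show "(\<Sum>n. \<bar>gN lam N n - g n\<bar>) \<le> 2 * c2 * real N powr (- \<alpha>2)" using elim by linarith
        show "(\<Sum>n. real n powr (1 + q) * gN lam N n) \<le> A" using elim by auto
      qed (use X gbd in auto)
      also have "X * (2 * c2 * real N powr (- \<alpha>2)) = 2 * c2 * real N powr (- \<beta>)"
        using N1 by (simp add: X_def powr_add[symmetric] \<beta>_def)
      also have "X powr (- q) = real N powr (- (\<beta> * q))"
        by (simp add: X_def powr_powr)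
      also have "2 * c2 * real N powr (- \<beta>) \<le> 2 * c2 * real N powr (- (\<beta> * q))"
        using N1 c2(1) beta q by (intro mult_left_mono powr_mono) (auto simp: mult_left_le)
      finally show "(\<Sum>n. real n * \<bar>gN lam N n - g n\<bar>) \<le> C * real N powr (- (\<beta> * q))"
        by (simp add: C_def algebra_simps)
    qed
  qed
  show ?thesis
  proof (intro exI[of _ "\<beta> * q"] conjI)
    show "\<beta> * q > 0" using beta q by simp
    show "\<forall>\<^sub>F N in sequentially. summable (\<lambda>n. real n * \<bar>gN lam N n - g n\<bar>)"
      using main by eventually_elim auto
    show "(\<lambda>N. \<Sum>n. real n * \<bar>gN lam N n - g n\<bar>) \<in> O(\<lambda>N. real N powr (- (\<beta> * q)))"
    proof (rule bigoI[of _ C])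
      show "\<forall>\<^sub>F N in sequentially. norm (\<Sum>n. real n * \<bar>gN lam N n - g n\<bar>) \<le> C * norm (real N powr (- (\<beta> * q)))"
        using main
      proof eventually_elim
        case (elim N)
        have "(\<Sum>n. real n * \<bar>gN lam N n - g n\<bar>) \<ge> 0" using elim by (intro suminf_nonneg) auto
        then show ?case using elim by simp
      qed
    qed
  qed
qed

end
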